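(* Let $\beta>0$ and let $N$ be a nonnegative integer random variable with $P(N\ge n)=1-e^{-\beta/n}$ for all integers $n\ge1$. Let $0<p<1$. For the one-dimensional oriented percolation with random range with bond parameter $p$, if $\beta>1/p$ then $\theta(p,0)=P(0\to\infty)>0$.
   Context: One-dimensional percolation with random range (equivalently, the APRR model with $q=0$, restricted to the line through the origin in direction $\vec e_1$). Let $\mathbf N=(N_i)_{i\in\mathbb{Z}}$ be i.i.d. with law $N$, and let $G_{\mathbf N}$ be the oriented graph on $\mathbb{Z}$ with bonds $\{(i,i+n): i\in\mathbb{Z},\ 1\le n\le N_i\}$. Given $p\in[0,1]$, each bond of $G_{\mathbf N}$ is open independently with probability $p$. $(0\to\infty)$ is the event that $0$ is connected by oriented open paths to infinitely many vertices, and $\theta(p,0)=P(0\to\infty)$. *)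

theory Defs
  imports "HOL-Probability.Probability"
begin

text \<open>Configuration at a site i: the range N_i and the bond states
  (bond (i, i+n) is open iff the second component is True at n; index 0 unused).\<close>
type_synonym site = "nat \<times> (nat \<Rightarrow> bool)"

definition site_measure :: "nat pmf \<Rightarrow> real \<Rightarrow> site measure" where
  "site_measure Nl p =
     measure_pmf Nl \<Otimes>\<^sub>M (PiM (UNIV :: nat set) (\<lambda>_. measure_pmf (bernoulli_pmf p)))"

definition perc_measure :: "nat pmf \<Rightarrow> real \<Rightarrow> (int \<Rightarrow> site) measure" where
  "perc_measure Nl p = PiM (UNIV :: int set) (\<lambda>_. site_measure Nl p)"

definition open_bond :: "(int \<Rightarrow> site) \<Rightarrow> int \<Rightarrow> int \<Rightarrow> bool" where
  "open_bond \<omega> i j \<longleftrightarrow> i < j \<and> j - i \<le> int (fst (\<omega> i)) \<and> snd (\<omega> i) (nat (j - i))"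

definition connected_to_infinity :: "(int \<Rightarrow> site) \<Rightarrow> bool" where
  "connected_to_infinity \<omega> \<longleftrightarrow>
     infinite {j. (0::int, j) \<in> {(i, j). open_bond \<omega> i j}\<^sup>*}"

definition theta :: "nat pmf \<Rightarrow> real \<Rightarrow> real" where
  "theta Nl p = measure (perc_measure Nl p)
     {\<omega> \<in> space (perc_measure Nl p). connected_to_infinity \<omega>}"

end

theory Submission
  imports Defs "HOL-Analysis.Analysis"
begin


lemma prob_B: "prob_space (PiM (UNIV::nat set) (\<lambda>_. measure_pmf (bernoulli_pmf p)))"
  by (intro prob_space_PiM prob_space_measure_pmf)

lemma prob_S: "prob_space (site_measure Nl p)"
  unfolding site_measure_def
  by (intro prob_space_pair prob_space_measure_pmf prob_B)

lemma space_S[simp]: "space (site_measure Nl p) = UNIV"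
  by (simp add: site_measure_def space_pair_measure space_PiM)

lemma space_P[simp]: "space (perc_measure Nl p) = UNIV"
  by (simp add: perc_measure_def space_PiM)

lemma meas_fst: "(\<lambda>\<omega>. fst (\<omega> i)) \<in> perc_measure Nl p \<rightarrow>\<^sub>M count_space UNIV"
proof -
  have 1: "(\<lambda>\<omega>. \<omega> i) \<in> perc_measure Nl p \<rightarrow>\<^sub>M site_measure Nl p"
    unfolding perc_measure_def by (rule measurable_component_singleton) simp
  have 2: "fst \<in> site_measure Nl p \<rightarrow>\<^sub>M measure_pmf Nl"
    unfolding site_measure_def by (rule measurable_fst)
  have 3: "(\<lambda>x. x) \<in> measure_pmf Nl \<rightarrow>\<^sub>M count_space UNIV"
    by (simp add: measurable_def)
  show ?thesis using measurable_compose[OF measurable_compose[OF 1 2] 3] by simp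
qed

lemma meas_snd: "(\<lambda>\<omega>. snd (\<omega> i) k) \<in> perc_measure Nl p \<rightarrow>\<^sub>M count_space UNIV"
proof -
  have 1: "(\<lambda>\<omega>. \<omega> i) \<in> perc_measure Nl p \<rightarrow>\<^sub>M site_measure Nl p"
    unfolding perc_measure_def by (rule measurable_component_singleton) simp
  have 2: "snd \<in> site_measure Nl p \<rightarrow>\<^sub>M PiM (UNIV::nat set) (\<lambda>_. measure_pmf (bernoulli_pmf p))"
    unfolding site_measure_def by (rule measurable_snd)
  have 3: "(\<lambda>f. f k) \<in> PiM (UNIV::nat set) (\<lambda>_. measure_pmf (bernoulli_pmf p)) \<rightarrow>\<^sub>M measure_pmf (bernoulli_pmf p)"
    by (rule measurable_component_singleton) simp
  have 4: "(\<lambda>x. x) \<in> measure_pmf (bernoulli_pmf p) \<rightarrow>\<^sub>M count_space UNIV"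
    by (simp add: measurable_def)
  show ?thesis using measurable_compose[OF measurable_compose[OF measurable_compose[OF 1 2] 3] 4] by simp
qed

lemma meas_ob: "Measurable.pred (perc_measure Nl p) (\<lambda>\<omega>. open_bond \<omega> i j)"
proof -
  have a: "Measurable.pred (perc_measure Nl p) (\<lambda>\<omega>. j - i \<le> int (fst (\<omega> i)))"
    using measurable_compose[OF meas_fst, of "\<lambda>n. j - i \<le> int n" "count_space UNIV"] by simp
  have b: "Measurable.pred (perc_measure Nl p) (\<lambda>\<omega>. snd (\<omega> i) (nat (j - i)))"
    using measurable_compose[OF meas_snd, of "\<lambda>n. n" "count_space UNIV"] by simp
  show ?thesis unfolding open_bond_def using a b by measurable
qed

lemma meas_relpow: "Measurable.pred (perc_measure Nl p) (\<lambda>\<omega>. (a, b) \<in> {(i, j). open_bond \<omega> i j} ^^ k)"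
proof (induction k arbitrary: b)
  case 0
  then show ?case by simp
next
  case (Suc k)
  have "(\<lambda>\<omega>. (a, b) \<in> {(i, j). open_bond \<omega> i j} ^^ Suc k) = (\<lambda>\<omega>. \<exists>c::int. (a, c) \<in> {(i, j). open_bond \<omega> i j} ^^ k \<and> open_bond \<omega> c b)"
    by auto
  then show ?case using Suc meas_ob by (simp del: relpow.simps) measurable
qed

lemma meas_conn: "{\<omega> \<in> space (perc_measure Nl p). connected_to_infinity \<omega>} \<in> sets (perc_measure Nl p)"
proof -
  have eq: "connected_to_infinity \<omega> \<longleftrightarrow> (\<forall>n::nat. \<exists>j::int. \<exists>k::nat. (0, j) \<in> {(i, j). open_bond \<omega> i j} ^^ k \<and> n \<le> \<bar>j\<bar>)" for \<omega>
  proof -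
    let ?S = "{j. (0::int, j) \<in> {(i, j). open_bond \<omega> i j}\<^sup>*}"
    have "finite ?S \<longleftrightarrow> (\<exists>n::nat. \<forall>j\<in>?S. \<bar>j\<bar> < n)"
    proof
      assume "finite ?S"
      then have "bdd_above (abs ` ?S)" by auto
      then obtain m where "\<forall>j\<in>?S. \<bar>j\<bar> \<le> m" by (auto simp: bdd_above_def)
      then show "\<exists>n::nat. \<forall>j\<in>?S. \<bar>j\<bar> < n"
        by (intro exI[of _ "nat m + 1"]) force
    next
      assume "\<exists>n::nat. \<forall>j\<in>?S. \<bar>j\<bar> < n"
      then obtain n::nat where "\<forall>j\<in>?S. \<bar>j\<bar> < n" by blast
      then have "?S \<subseteq> {-int n..int n}" by force
      then show "finite ?S" using finite_subset by blast
    qed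
    then show ?thesis unfolding connected_to_infinity_def
      by (auto simp: rtrancl_power not_less)
  qed
  show ?thesis unfolding eq using meas_relpow by measurable
qed



lemma one_minus_exp_ge: fixes x :: real assumes "0 \<le> x" shows "x - x\<^sup>2 \<le> 1 - exp (- x)"
proof -
  have "1 + x \<le> exp x" by (rule exp_ge_add_one_self_aux) (use assms in simp)
  then have "exp (- x) \<le> 1 / (1 + x)" using assms
    by (simp add: exp_minus field_simps)
  moreover have "x - x\<^sup>2 \<le> 1 - 1 / (1 + x)" using assms
    by (simp add: field_simps power2_eq_square)
  ultimately show ?thesis by linarith
qed

lemma summable_A:
  fixes \<beta> p :: real
  assumes "\<beta> > 0" "p > 0" "p * \<beta> > 1"
  shows "summable (\<lambda>j. exp (- p * (\<Sum>i<j. 1 - exp (- \<beta> / real (Suc i)))))"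
proof -
  define c where "c = (\<Sum>n. inverse (real (Suc n)) ^ 2)"
  have sc: "summable (\<lambda>n. inverse (real (Suc n)) ^ 2)"
  proof -
    have "summable (\<lambda>n. inverse (real n ^ 2))" by (rule inverse_power_summable) auto
    then have "summable (\<lambda>n. inverse (real (n + 1) ^ 2))"
      by (rule summable_ignore_initial_segment)
    then show ?thesis by (simp add: power_inverse)
  qed
  have sp: "summable (\<lambda>j. real (Suc j) powr (- (p * \<beta>)))"
  proof -
    have "summable (\<lambda>n. real n powr (- (p * \<beta>)))" using assms by (simp add: summable_real_powr_iff)
    then have "summable (\<lambda>n. real (n + 1) powr (- (p * \<beta>)))"
      by (rule summable_ignore_initial_segment)
    then show ?thesis by simp
  qed
  have bound: "exp (- p * (\<Sum>i<j. 1 - exp (- \<beta> / real (Suc i)))) \<le> exp (p * \<beta>\<^sup>2 * c) * real (Suc j) powr (- (p * \<beta>))" for j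
  proof -
    have s1: "(\<Sum>i<j. 1 - exp (- \<beta> / real (Suc i))) \<ge> (\<Sum>i<j. \<beta> * inverse (real (Suc i)) - \<beta>\<^sup>2 * inverse (real (Suc i)) ^ 2)"
    proof (rule sum_mono)
      fix i assume "i \<in> {..<j}"
      have "\<beta> / real (Suc i) - (\<beta> / real (Suc i))\<^sup>2 \<le> 1 - exp (- (\<beta> / real (Suc i)))"
        using assms by (intro one_minus_exp_ge) auto
      then show "\<beta> * inverse (real (Suc i)) - \<beta>\<^sup>2 * inverse (real (Suc i)) ^ 2 \<le> 1 - exp (- \<beta> / real (Suc i))"
        by (simp add: field_simps power2_eq_square)
    qed
    have s2: "(\<Sum>i<j. \<beta> * inverse (real (Suc i)) - \<beta>\<^sup>2 * inverse (real (Suc i)) ^ 2)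
        = \<beta> * harm j - \<beta>\<^sup>2 * (\<Sum>i<j. inverse (real (Suc i)) ^ 2)"
      by (simp add: sum_subtractf sum_distrib_left harm_altdef)
    have s3: "(\<Sum>i<j. inverse (real (Suc i)) ^ 2) \<le> c"
      unfolding c_def by (rule sum_le_suminf[OF sc]) auto
    have s4: "ln (real j + 1) \<le> harm j" by (rule ln_le_harm)
    have "\<beta> * ln (real (Suc j)) - \<beta>\<^sup>2 * c \<le> (\<Sum>i<j. 1 - exp (- \<beta> / real (Suc i)))"
    proof -
      have "\<beta> * ln (real (Suc j)) \<le> \<beta> * harm j" using s4 assms by (simp add: add.commute)
      moreover have "\<beta>\<^sup>2 * (\<Sum>i<j. inverse (real (Suc i)) ^ 2) \<le> \<beta>\<^sup>2 * c"
        using s3 by (simp add: mult_left_mono)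
      ultimately show ?thesis using s1 s2 by linarith
    qed
    then have "- p * (\<Sum>i<j. 1 - exp (- \<beta> / real (Suc i))) \<le> p * \<beta>\<^sup>2 * c + (- (p * \<beta>)) * ln (real (Suc j))"
      using assms(2) mult_left_mono[OF \<open>\<beta> * ln (real (Suc j)) - \<beta>\<^sup>2 * c \<le> _\<close>, of p]
      by (simp add: algebra_simps)
    then have "exp (- p * (\<Sum>i<j. 1 - exp (- \<beta> / real (Suc i)))) \<le> exp (p * \<beta>\<^sup>2 * c + (- (p * \<beta>)) * ln (real (Suc j)))"
      by simp
    also have "\<dots> = exp (p * \<beta>\<^sup>2 * c) * real (Suc j) powr (- (p * \<beta>))"
      by (simp add: exp_add[symmetric] powr_def)
    finally show ?thesis .
  qed
  show ?thesis
    by (rule summable_comparison_test[where g = "\<lambda>j. exp (p * \<beta>\<^sup>2 * c) * real (Suc j) powr (- (p * \<beta>))"])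
       (use bound sp in \<open>auto intro: summable_mult\<close>)
qed



definition Ob :: "nat \<Rightarrow> site set" where "Ob m = {s. m \<le> fst s \<and> snd s m}"

lemma measB: assumes "finite F" "0 \<le> p" "p \<le> 1"
  shows "measure (PiM (UNIV::nat set) (\<lambda>_. measure_pmf (bernoulli_pmf p))) {f. \<forall>k\<in>F. f k} = p ^ card F"
proof -
  interpret PB: product_prob_space "\<lambda>_::nat. measure_pmf (bernoulli_pmf p)" "UNIV::nat set"
    by (rule product_prob_spaceI) (rule prob_space_measure_pmf)
  have "emeasure (PiM (UNIV::nat set) (\<lambda>_. measure_pmf (bernoulli_pmf p))) {x\<in>space (PiM (UNIV::nat set) (\<lambda>_. measure_pmf (bernoulli_pmf p))). \<forall>i\<in>F. x i \<in> {True}}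
     = (\<Prod>i\<in>F. emeasure (measure_pmf (bernoulli_pmf p)) {True})"
    by (rule PB.emeasure_PiM_Collect) (use assms in auto)
  also have "\<dots> = ennreal (p ^ card F)"
    using assms by (simp add: emeasure_pmf_single prod_ennreal[symmetric] ennreal_power)
  finally have "emeasure (PiM (UNIV::nat set) (\<lambda>_. measure_pmf (bernoulli_pmf p))) {f. \<forall>k\<in>F. f k} = ennreal (p ^ card F)"
    by (simp add: space_PiM)
  then show ?thesis using assms by (simp add: PB.P.emeasure_eq_measure)
qed

lemma measS: assumes "finite F" "0 \<le> p" "p \<le> 1"
  shows "measure (site_measure Nl p) (A \<times> {f. \<forall>k\<in>F. f k}) = measure_pmf.prob Nl A * p ^ card F"
proof -
  interpret B: prob_space "PiM (UNIV::nat set) (\<lambda>_. measure_pmf (bernoulli_pmf p))" by (rule prob_B)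
  interpret S: prob_space "site_measure Nl p" by (rule prob_S)
  have mB: "{f. \<forall>k\<in>F. f k} \<in> sets (PiM (UNIV::nat set) (\<lambda>_. measure_pmf (bernoulli_pmf p)))"
  proof -
    have "{f. \<forall>k\<in>F. f k} = {x\<in>space (PiM (UNIV::nat set) (\<lambda>_. measure_pmf (bernoulli_pmf p))). \<forall>i\<in>F. x i \<in> {True}}"
      by (auto simp: space_PiM)
    also have "\<dots> \<in> sets (PiM (UNIV::nat set) (\<lambda>_. measure_pmf (bernoulli_pmf p)))"
      by (rule sets.sets_Collect_finite_All) (auto intro: sets_Collect_single simp: assms(1))
    finally show ?thesis .
  qed
  have "emeasure (site_measure Nl p) (A \<times> {f. \<forall>k\<in>F. f k}) = emeasure (measure_pmf Nl) A * emeasure (PiM (UNIV::nat set) (\<lambda>_. measure_pmf (bernoulli_pmf p))) {f. \<forall>k\<in>F. f k}"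
    unfolding site_measure_def by (rule B.emeasure_pair_measure_Times) (use mB in auto)
  then have "ennreal (measure (site_measure Nl p) (A \<times> {f. \<forall>k\<in>F. f k})) = ennreal (measure_pmf.prob Nl A * p ^ card F)"
    using measB[OF assms] assms
    by (simp add: S.emeasure_eq_measure B.emeasure_eq_measure measure_pmf.emeasure_eq_measure ennreal_mult'')
  then show ?thesis using assms by (simp add: ennreal_inj)
qed



lemma setsB: "{f. \<forall>k\<in>F. f k} \<in> sets (PiM (UNIV::nat set) (\<lambda>_. measure_pmf (bernoulli_pmf p)))" if "finite F"
proof -
  have "{f. \<forall>k\<in>F. f k} = {x\<in>space (PiM (UNIV::nat set) (\<lambda>_. measure_pmf (bernoulli_pmf p))). \<forall>i\<in>F. x i \<in> {True}}"
    by (auto simp: space_PiM)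
  also have "\<dots> \<in> sets (PiM (UNIV::nat set) (\<lambda>_. measure_pmf (bernoulli_pmf p)))"
    by (rule sets.sets_Collect_finite_All) (auto intro: sets_Collect_single simp: that)
  finally show ?thesis .
qed

lemma Ob_eq: "m \<ge> 1 \<Longrightarrow> Ob m = {m..} \<times> {f. \<forall>k\<in>{m}. f k}"
  by (auto simp: Ob_def)

lemma Ob1m_eq: "m \<ge> 2 \<Longrightarrow> Ob 1 \<inter> Ob m = {m..} \<times> {f. \<forall>k\<in>{1,m}. f k}"
  by (auto simp: Ob_def)

lemma sets_Ob: "m \<ge> 1 \<Longrightarrow> Ob m \<in> sets (site_measure Nl p)"
  unfolding Ob_eq site_measure_def by (intro pair_measureI setsB) auto

lemma meas_Ob: "m \<ge> 1 \<Longrightarrow> 0 \<le> p \<Longrightarrow> p \<le> 1 \<Longrightarrow> measure (site_measure Nl p) (Ob m) = measure_pmf.prob Nl {m..} * p"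
  unfolding Ob_eq by (subst measS) auto

lemma meas_Ob1m: "m \<ge> 2 \<Longrightarrow> 0 \<le> p \<Longrightarrow> p \<le> 1 \<Longrightarrow> measure (site_measure Nl p) (Ob 1 \<inter> Ob m) = measure_pmf.prob Nl {m..} * p\<^sup>2"
  unfolding Ob1m_eq by (subst measS) (auto simp: card_insert_if power2_eq_square)

lemma meas_nOb: assumes "m \<ge> 1" "0 \<le> p" "p \<le> 1"
  shows "measure (site_measure Nl p) (- Ob m) = 1 - measure_pmf.prob Nl {m..} * p"
proof -
  interpret S: prob_space "site_measure Nl p" by (rule prob_S)
  have "- Ob m = space (site_measure Nl p) - Ob m" by auto
  then show ?thesis using S.prob_compl[OF sets_Ob[OF assms(1)]] meas_Ob[OF assms] by simp
qed

lemma meas_Ob1_nOb: assumes "m \<ge> 2" "0 \<le> p" "p \<le> 1"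
  shows "measure (site_measure Nl p) (Ob 1 \<inter> - Ob m) = measure_pmf.prob Nl {1..} * p - measure_pmf.prob Nl {m..} * p\<^sup>2"
proof -
  interpret S: prob_space "site_measure Nl p" by (rule prob_S)
  have "Ob 1 \<inter> - Ob m = Ob 1 - Ob m" by auto
  then show ?thesis using S.finite_measure_Diff'[OF sets_Ob sets_Ob, of 1 m] meas_Ob[of 1] meas_Ob1m[of m] assms by simp
qed

lemma measP: assumes "finite J" "\<And>i. i \<in> J \<Longrightarrow> X i \<in> sets (site_measure Nl p)"
  shows "measure (perc_measure Nl p) {\<omega>. \<forall>i\<in>J. \<omega> i \<in> X i} = (\<Prod>i\<in>J. measure (site_measure Nl p) (X i))"
proof -
  interpret PP: product_prob_space "\<lambda>_::int. site_measure Nl p" "UNIV::int set"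
    by (rule product_prob_spaceI) (rule prob_S)
  have "emeasure (PiM UNIV (\<lambda>_::int. site_measure Nl p)) {x\<in>space (PiM UNIV (\<lambda>_::int. site_measure Nl p)). \<forall>i\<in>J. x i \<in> X i}
     = (\<Prod>i\<in>J. emeasure (site_measure Nl p) (X i))"
    by (rule PP.emeasure_PiM_Collect) (use assms in auto)
  then have "ennreal (measure (perc_measure Nl p) {\<omega>. \<forall>i\<in>J. \<omega> i \<in> X i}) = ennreal (\<Prod>i\<in>J. measure (site_measure Nl p) (X i))"
    by (simp add: perc_measure_def space_PiM PP.P.emeasure_eq_measure PP.M.emeasure_eq_measure prod_ennreal measure_nonneg)
  then show ?thesis by (simp add: prod_nonneg measure_nonneg)
qed

lemma sets_P_Collect: assumes "finite J" "\<And>i. i \<in> J \<Longrightarrow> X i \<in> sets (site_measure Nl p)"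
  shows "{\<omega>. \<forall>i\<in>J. \<omega> i \<in> X i} \<in> sets (perc_measure Nl p)"
proof -
  have "{\<omega>. \<forall>i\<in>J. \<omega> i \<in> X i} = {x\<in>space (perc_measure Nl p). \<forall>i\<in>J. x i \<in> X i}" by simp
  also have "\<dots> \<in> sets (perc_measure Nl p)" unfolding perc_measure_def
    by (rule sets.sets_Collect_finite_All) (auto intro: sets_Collect_single assms)
  finally show ?thesis .
qed

lemma prod_int_reindex: "(\<Prod>i\<in>{0..<int j}. g i) = (\<Prod>i<j. g (int i))"
proof -
  have "{0..<int j} = int ` {..<j}" by (auto simp: image_iff intro!: bexI[of _ "nat _"])
  then show ?thesis by (simp add: prod.reindex)
qed



theorem theorem6:
  fixes \<beta> p :: real and Nl :: "nat pmf"
  assumes "\<beta> > 0"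
    and "\<And>n::nat. n \<ge> 1 \<Longrightarrow> measure_pmf.prob Nl {n..} = 1 - exp (- \<beta> / real n)"
    and "0 < p" and "p < 1"
    and "\<beta> > 1 / p"
  shows "theta Nl p > 0"
proof -
  define S where "S = site_measure Nl p"
  define P where "P = perc_measure Nl p"
  define q where "q = (\<lambda>m. measure_pmf.prob Nl {m..})"
  interpret S: prob_space S unfolding S_def by (rule prob_S)
  interpret P: prob_space P unfolding P_def perc_measure_def
    by (rule prob_space_PiM) (rule prob_S)
  have p01: "0 \<le> p" "p \<le> 1" using assms by auto
  have q01: "0 \<le> q m" "q m \<le> 1" for m unfolding q_def by auto
  define a where "a = (\<lambda>j. exp (- p * (\<Sum>i<j. q (Suc i))))"
  have suma: "summable a"
  proof -
    have "a = (\<lambda>j. exp (- p * (\<Sum>i<j. 1 - exp (- \<beta> / real (Suc i)))))"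
      unfolding a_def q_def using assms(2) by (intro ext) (simp del: of_nat_Suc)
    moreover have "p * \<beta> > 1" using assms(3,5) by (simp add: field_simps)
    ultimately show ?thesis using summable_A[OF assms(1) assms(3)] by simp
  qed
  have a_nn: "a j \<ge> 0" for j unfolding a_def by simp
  define mH where "mH = q 1 * p"
  have mH_pos: "mH > 0"
  proof -
    have "q 1 = 1 - exp (- \<beta>)" unfolding q_def using assms(2)[of 1] by simp
    moreover have "exp (- \<beta>) < 1" using assms(1) by simp
    ultimately show ?thesis unfolding mH_def using assms(3) by simp
  qed
  obtain K where K: "norm (\<Sum>t. a (t + Suc K)) < 1"
    using suminf_exist_split[OF zero_less_one suma] by (metis le_SucI order_refl)
  define T where "T = (\<Sum>t. a (t + Suc K))"
  have T1: "T < 1" using K unfolding T_def by simp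
  have sumT: "summable (\<lambda>t. a (t + Suc K))" using suma by (rule summable_ignore_initial_segment)
  define head where "head = {\<omega>::int \<Rightarrow> site. \<forall>i\<in>{0..<int K}. \<omega> i \<in> Ob 1}"
  define fail where "fail = (\<lambda>j::nat. {\<omega>::int \<Rightarrow> site. \<forall>i\<in>{0..<int j}. \<omega> i \<in> - Ob (nat (int j - i))})"
  define X where "X = (\<lambda>(j::nat) (i::int). if i < int K then Ob 1 \<inter> - Ob (nat (int j - i)) else - Ob (nat (int j - i)))"
  define F where "F = (\<lambda>t. head \<inter> fail (t + Suc K))"
  have F_eq: "F t = {\<omega>. \<forall>i\<in>{0..<int (t + Suc K)}. \<omega> i \<in> X (t + Suc K) i}" for t
    unfolding F_def head_def fail_def X_def by auto
  have setsX: "X j i \<in> sets S" if "i \<in> {0..<int j}" for j i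
  proof -
    have "nat (int j - i) \<ge> 1" using that by auto
    moreover have "- Ob m \<in> sets (site_measure Nl p)" if "m \<ge> 1" for m
    proof -
      have "- Ob m = space (site_measure Nl p) - Ob m" by auto
      then show ?thesis using sets.compl_sets[OF sets_Ob[OF that]] by simp
    qed
    ultimately show ?thesis unfolding X_def S_def
      by (auto intro!: sets.Int sets_Ob)
  qed
  have setsF: "F t \<in> sets P" for t
    unfolding F_eq P_def by (rule sets_P_Collect) (use setsX[unfolded S_def] in auto)
  have sets_head: "head \<in> sets P"
    unfolding head_def P_def by (rule sets_P_Collect) (auto intro: sets_Ob)
  have meas_head: "measure P head = mH ^ K"
    unfolding head_def P_def using measP[of "{0..<int K}" "\<lambda>_. Ob 1" Nl p]
    by (simp add: sets_Ob meas_Ob p01 mH_def q_def)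
  have measF: "measure P (F t) \<le> mH ^ K * a (t + Suc K)" for t
  proof -
    define j where "j = t + Suc K"
    have Kj: "K < j" unfolding j_def by simp
    have "measure P (F t) = (\<Prod>i\<in>{0..<int j}. measure S (X j i))"
      unfolding F_eq P_def S_def j_def by (rule measP) (use setsX[unfolded S_def] in auto)
    also have "\<dots> = (\<Prod>i<j. measure S (X j (int i)))" by (rule prod_int_reindex)
    also have "\<dots> \<le> (\<Prod>i<j. (if i < K then mH else 1) * (1 - p * q (j - i)))"
    proof (rule prod_mono)
      fix i assume i: "i \<in> {..<j}"
      show "0 \<le> measure S (X j (int i)) \<and> measure S (X j (int i)) \<le> (if i < K then mH else 1) * (1 - p * q (j - i))"
      proof (cases "i < K")
        case True
        then have "j - i \<ge> 2" using Kj by linarith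
        then have "measure S (X j (int i)) = q 1 * p - q (j - i) * p\<^sup>2"
          unfolding X_def S_def q_def using True p01 meas_Ob1_nOb[of "j - i" p Nl]
          by (simp add: nat_diff_distrib)
        also have "\<dots> \<le> mH * (1 - p * q (j - i))"
        proof -
          have "q 1 * (p * p * q (j - i)) \<le> p * p * q (j - i)"
            using q01[of 1] q01[of "j-i"] p01 by (simp add: mult_left_le_one_le)
          then show ?thesis unfolding mH_def by (simp add: algebra_simps power2_eq_square)
        qed
        finally show ?thesis using True by simp
      next
        case False
        have "j - i \<ge> 1" using i by auto
        then have "measure S (X j (int i)) = 1 - q (j - i) * p"
          unfolding X_def S_def q_def using False p01 meas_nOb[of "j - i" p Nl]
          by (simp add: nat_diff_distrib of_nat_diff)
        then show ?thesis using False by (simp add: algebra_simps)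
      qed
    qed
    also have "\<dots> = (\<Prod>i<j. (if i < K then mH else 1)) * (\<Prod>i<j. 1 - p * q (j - i))"
      by (rule prod.distrib)
    also have "(\<Prod>i<j. (if i < K then mH else 1)) = mH ^ K"
    proof -
      have "{..<j} \<inter> {i. i < K} = {..<K}" using Kj by auto
      then show ?thesis by (simp add: prod.If_cases)
    qed
    also have "(\<Prod>i<j. 1 - p * q (j - i)) \<le> (\<Prod>i<j. exp (- p * q (j - i)))"
    proof (rule prod_mono)
      fix i
      have "p * q (j - i) \<le> 1" using q01[of "j - i"] p01 by (simp add: mult_le_one)
      moreover have "1 + (- p * q (j - i)) \<le> exp (- p * q (j - i))" by (rule exp_ge_add_one_self)
      ultimately show "0 \<le> 1 - p * q (j - i) \<and> 1 - p * q (j - i) \<le> exp (- p * q (j - i))" by simp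
    qed
    also have "(\<Prod>i<j. exp (- p * q (j - i))) = exp (- p * (\<Sum>i<j. q (j - i)))"
      by (simp add: exp_sum sum_distrib_left)
    also have "(\<Sum>i<j. q (j - i)) = (\<Sum>i<j. q (Suc i))"
    proof -
      have "(\<Sum>i<j. q (j - i)) = (\<Sum>i<j. (\<lambda>i. q (Suc i)) (j - Suc i))"
        by (intro sum.cong) (auto simp: Suc_diff_Suc)
      also have "\<dots> = (\<Sum>i<j. q (Suc i))" by (rule sum.nat_diff_reindex)
      finally show ?thesis .
    qed
    finally show ?thesis unfolding a_def j_def using mH_pos by (simp add: mult_left_mono)
  qed
  have sumF: "summable (\<lambda>t. measure P (F t))"
    by (rule summable_comparison_test[where g = "\<lambda>t. mH ^ K * a (t + Suc K)"])
       (use measF sumT in \<open>auto intro: summable_mult\<close>)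
  have UF: "measure P (\<Union>t. F t) \<le> mH ^ K * T"
  proof -
    have "measure P (\<Union>t. F t) \<le> (\<Sum>t. measure P (F t))"
      by (rule P.finite_measure_subadditive_countably) (use setsF sumF in auto)
    also have "\<dots> \<le> (\<Sum>t. mH ^ K * a (t + Suc K))"
      by (rule suminf_le) (use measF sumF sumT in \<open>auto intro: summable_mult\<close>)
    also have "\<dots> = mH ^ K * T" unfolding T_def by (rule suminf_mult[OF sumT])
    finally show ?thesis .
  qed
  define E where "E = head - (\<Union>t. F t)"
  have sets_UF: "(\<Union>t. F t) \<in> sets P" using setsF by auto
  have measE: "measure P E > 0"
  proof -
    have "measure P E = measure P head - measure P (\<Union>t. F t)"
      unfolding E_def by (rule P.finite_measure_Diff[OF sets_head sets_UF]) (auto simp: F_def)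
    also have "\<dots> \<ge> mH ^ K * (1 - T)" using UF meas_head by (simp add: algebra_simps)
    moreover have "mH ^ K * (1 - T) > 0" using mH_pos T1 by simp
    ultimately show ?thesis by linarith
  qed
  have E_sub: "E \<subseteq> {\<omega>. connected_to_infinity \<omega>}"
  proof
    fix \<omega> assume "\<omega> \<in> E"
    then have hd: "\<omega> \<in> head" and nF: "\<And>t. \<omega> \<notin> F t" unfolding E_def by auto
    let ?R = "{(i, j). open_bond \<omega> i j}"
    have reach: "(0, int n) \<in> ?R\<^sup>*" for n
    proof (induction n rule: less_induct)
      case (less n)
      show ?case
      proof (cases n)
        case 0 then show ?thesis by simp
      next
        case (Suc m)
        show ?thesis
        proof (cases "n \<le> K")
          case True
          then have "\<omega> (int m) \<in> Ob 1" using hd Suc unfolding head_def by auto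
          then have "open_bond \<omega> (int m) (int n)" unfolding Ob_def open_bond_def using Suc by auto
          then show ?thesis using less[of m] Suc by (auto intro: rtrancl_into_rtrancl)
        next
          case False
          define t where "t = n - Suc K"
          have nt: "n = t + Suc K" using False unfolding t_def by auto
          have "\<omega> \<notin> fail n" using nF[of t] hd unfolding F_def nt by auto
          then obtain i where i: "i \<in> {0..<int n}" "\<omega> i \<notin> - Ob (nat (int n - i))"
            unfolding fail_def by auto
          define i' where "i' = nat i"
          have ii: "i = int i'" "i' < n" using i unfolding i'_def by auto
          have "open_bond \<omega> i (int n)"
            using i ii unfolding Ob_def open_bond_def by (auto simp: nat_diff_distrib)
          then show ?thesis using less[of i'] ii by (auto intro: rtrancl_into_rtrancl)
        qed
      qed
    qed
    have "range int \<subseteq> {j. (0::int, j) \<in> ?R\<^sup>*}" using reach by auto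
    moreover have "infinite (range (int :: nat \<Rightarrow> int))"
      using finite_imageD[of int "UNIV::nat set"] by auto
    ultimately show "\<omega> \<in> {\<omega>. connected_to_infinity \<omega>}"
      unfolding connected_to_infinity_def using finite_subset by auto
  qed
  have "measure P E \<le> measure P {\<omega> \<in> space P. connected_to_infinity \<omega>}"
    by (rule P.finite_measure_mono) (use E_sub meas_conn[of Nl p] in \<open>auto simp: P_def\<close>)
  then show ?thesis using measE unfolding theta_def P_def by simp
qed


end
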